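(* Let $A^*\in\mathbb C^{N\times n}$ be isometric ($AA^*=I_n$), $x_0\in\mathbb C^n\setminus\{0\}$, $b=|A^*x_0|$, and let $\mathcal F(x)=A\big(b\odot\frac{A^*x}{|A^*x|}\big)$. Suppose $$\lambda_2:=\max\{\|\Im(B^*u)\|:\ u\in\mathbb C^n,\ \langle iu,x_0\rangle=0,\ \|u\|=1\}<1.$$ Then for every $0<\epsilon<1-\lambda_2^2$ there is a neighborhood of $x_0$ such that for every $x^{(1)}$ in it, the iterates $x^{(k+1)}=\mathcal F^k(x^{(1)})$ satisfy $$\|\alpha^{(k+1)}x^{(k+1)}-x_0\|\le(\lambda_2^2+\epsilon)\|\alpha^{(k)}x^{(k)}-x_0\|\quad\text{for all }k\ge1,$$ where $\alpha^{(k)}:=\arg\min\{\|\alpha x^{(k)}-x_0\|:\alpha\in\mathbb C,\ |\alpha|=1\}$. In particular $\alpha^{(k)}x^{(k)}\to x_0$ geometrically.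
   Context: $|y|$ is the componentwise modulus, $\odot$ the componentwise product, $y/|y|$ the componentwise quotient with convention $y(j)/|y(j)|=1$ if $y(j)=0$. $B:=A\,\mathrm{diag}\big(\frac{A^*x_0}{|A^*x_0|}\big)$. The real inner product on $\mathbb C^n$ is $\langle u,v\rangle=\Re(u^*v)$. *)

theory Defs
  imports "HOL-Analysis.Analysis"
begin

definition cadj :: "complex^'n^'m \<Rightarrow> complex^'m^'n" where
  "cadj M = (\<chi> i j. cnj (M $ j $ i))"

definition cabsv :: "complex^'n \<Rightarrow> complex^'n" where
  "cabsv y = (\<chi> j. complex_of_real (cmod (y $ j)))"

definition phasev :: "complex^'n \<Rightarrow> complex^'n" where
  "phasev y = (\<chi> j. if y $ j = 0 then 1 else y $ j / complex_of_real (cmod (y $ j)))"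

definition hadamard :: "complex^'n \<Rightarrow> complex^'n \<Rightarrow> complex^'n" where
  "hadamard u v = (\<chi> j. u $ j * v $ j)"

definition cdiag :: "complex^'n \<Rightarrow> complex^'n^'n" where
  "cdiag d = (\<chi> i j. if i = j then d $ i else 0)"

definition Imv :: "complex^'n \<Rightarrow> real^'n" where
  "Imv y = (\<chi> j. Im (y $ j))"

definition rinner :: "complex^'n \<Rightarrow> complex^'n \<Rightarrow> real" where
  "rinner u v = Re (\<Sum>j\<in>UNIV. cnj (u $ j) * v $ j)"

definition Fmap :: "complex^'N^'n \<Rightarrow> complex^'n \<Rightarrow> complex^'n \<Rightarrow> complex^'n" where
  "Fmap A x0 x = A *v hadamard (cabsv (cadj A *v x0)) (phasev (cadj A *v x))"

definition Bmat :: "complex^'N^'n \<Rightarrow> complex^'n \<Rightarrow> complex^'N^'n" where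
  "Bmat A x0 = A ** cdiag (phasev (cadj A *v x0))"

text \<open>lambda_2 (the maximum over a compact set, written as a supremum).\<close>
definition lambda2 :: "complex^'N^'n \<Rightarrow> complex^'n \<Rightarrow> real" where
  "lambda2 A x0 = Sup {norm (Imv (cadj (Bmat A x0) *v u)) | u.
       rinner (\<i> *s u) x0 = 0 \<and> norm u = 1}"

definition align_set :: "complex^'n \<Rightarrow> complex^'n \<Rightarrow> complex set" where
  "align_set x0 x = {\<alpha>. cmod \<alpha> = 1 \<and>
       (\<forall>\<beta>. cmod \<beta> = 1 \<longrightarrow> norm (\<alpha> *s x - x0) \<le> norm (\<beta> *s x - x0))}"

end

theory Submission
  imports Defs
begin

definition cinner :: "complex^'n \<Rightarrow> complex^'n \<Rightarrow> complex" where
  "cinner u v = (\<Sum>j\<in>UNIV. cnj (u $ j) * v $ j)"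

lemma inner_cinner: "inner u v = Re (cinner u v)"
  by (simp add: inner_vec_def cinner_def inner_complex_def Re_sum)

lemma rinner_eq: "rinner u v = inner u v"
  by (simp add: rinner_def inner_cinner cinner_def)

lemma cinner_adj: "cinner u (M *v v) = cinner (cadj M *v u) v"
proof -
  have "cinner u (M *v v) = (\<Sum>i\<in>UNIV. \<Sum>j\<in>UNIV. cnj (u$i) * (M$i$j * v$j))"
    by (simp add: cinner_def matrix_vector_mult_def sum_distrib_left)
  also have "\<dots> = (\<Sum>j\<in>UNIV. \<Sum>i\<in>UNIV. cnj (u$i) * (M$i$j * v$j))"
    by (rule sum.swap)
  also have "\<dots> = cinner (cadj M *v u) v"
    by (simp add: cinner_def matrix_vector_mult_def cadj_def sum_distrib_right sum_distrib_left mult_ac)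
  finally show ?thesis .
qed

lemma inner_adj: "inner u (M *v v) = inner (cadj M *v u) v"
  by (simp add: inner_cinner cinner_adj)

lemma cadj_cadj: "cadj (cadj M) = M"
  by (simp add: cadj_def vec_eq_iff)

lemma cinner_scale_right: "cinner u (a *s v) = a * cinner u v"
  by (simp add: cinner_def sum_distrib_left mult_ac)

lemma cinner_scale_left: "cinner (a *s u) v = cnj a * cinner u v"
  by (simp add: cinner_def sum_distrib_left mult_ac)

lemma cinner_diff_right: "cinner u (v - w) = cinner u v - cinner u w"
  by (simp add: cinner_def algebra_simps sum_subtractf)

lemma cinner_commute: "cinner v u = cnj (cinner u v)"
  by (simp add: cinner_def mult.commute)

lemma norm_sq_vec: "(norm (v::complex^'n))^2 = (\<Sum>j\<in>UNIV. (cmod (v$j))^2)"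
  by (simp add: norm_vec_def L2_set_def sum_nonneg)

lemma norm_scale_vec: "norm (a *s (v::complex^'n)) = cmod a * norm v"
  by (simp add: norm_vec_def L2_set_right_distrib norm_mult)

lemma mat_scale: "(M::complex^'m^'n) *v (a *s v) = a *s (M *v v)"
  by (simp add: vec_eq_iff matrix_vector_mult_def sum_distrib_left mult_ac)

lemma iso_norm:
  assumes iso: "(A::complex^'N^'n) ** cadj A = mat 1"
  shows "norm (cadj A *v u) = norm u"
proof -
  have "inner (cadj A *v u) (cadj A *v u) = inner u (A *v (cadj A *v u))"
    using inner_adj[of u A "cadj A *v u"] by simp
  also have "\<dots> = inner u u" by (simp add: matrix_vector_mul_assoc iso)
  finally show ?thesis by (simp add: norm_eq_sqrt_inner)
qed

lemma A_contr:
  assumes iso: "(A::complex^'N^'n) ** cadj A = mat 1"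
  shows "norm (A *v v) \<le> norm v"
proof -
  have "(norm (A *v v))^2 = inner (A *v v) (A *v v)" by (simp add: power2_norm_eq_inner)
  also have "\<dots> = inner (cadj A *v (A *v v)) v" by (rule inner_adj)
  also have "\<dots> \<le> norm (cadj A *v (A *v v)) * norm v" by (rule norm_cauchy_schwarz)
  also have "\<dots> = norm (A *v v) * norm v" using iso_norm[OF iso] by simp
  finally have "norm (A *v v) * norm (A *v v) \<le> norm (A *v v) * norm v" by (simp add: power2_eq_square)
  then show ?thesis
    by (metis mult_le_cancel_left_pos norm_ge_zero order_le_less zero_le_mult_iff mult_zero_left norm_le_zero_iff)
qed



lemma lemR:
  fixes r :: real and z :: complex
  assumes r: "r > 0" and z: "cmod z \<le> r / 2"
  shows "cmod (complex_of_real r * ((of_real r + z) / of_real (cmod (of_real r + z))) - of_real r - \<i> * of_real (Im z))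
         \<le> 5 * (cmod z)^2 / r"
proof -
  define q where "q = complex_of_real r + z"
  define \<rho> where "\<rho> = cmod q"
  have rho_ge: "\<rho> \<ge> r - cmod z"
    unfolding \<rho>_def q_def using norm_triangle_ineq2[of "complex_of_real r" "-z"]
    by (smt (verit) norm_minus_cancel norm_of_real norm_triangle_ineq4 diff_minus_eq_add)
  hence rho_pos: "\<rho> \<ge> r/2" using z by linarith
  hence rp: "\<rho> > 0" using r by linarith
  have eq: "complex_of_real r * (q / of_real \<rho>) - of_real r - \<i> * of_real (Im z)
        = (q / of_real \<rho> - 1) * of_real (r - \<rho>) + of_real (r - \<rho> + Re z)"
    using rp unfolding q_def by (simp add: field_simps complex_eq_iff)
  have rr: "\<bar>r - \<rho>\<bar> \<le> cmod z"
    unfolding \<rho>_def q_def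
    by (metis abs_norm_cancel add_diff_cancel_left' norm_of_real norm_triangle_ineq3 abs_of_pos r abs_minus_commute)
  have "cmod (q - of_real \<rho>) \<le> cmod (q - of_real r) + cmod (of_real r - of_real \<rho> :: complex)"
    by (rule norm_diff_triangle_ineq[of q "of_real r" "of_real r" "of_real \<rho>", simplified])
  also have "\<dots> \<le> 2 * cmod z"
    using rr by (simp add: q_def norm_of_real flip: of_real_diff)
  finally have qd: "cmod (q - of_real \<rho>) \<le> 2 * cmod z" .
  have t1: "cmod (q / of_real \<rho> - 1) \<le> 4 * cmod z / r"
  proof -
    have "q / of_real \<rho> - 1 = (q - of_real \<rho>) / of_real \<rho>" using rp by (simp add: field_simps)
    hence "cmod (q / of_real \<rho> - 1) = cmod (q - of_real \<rho>) / \<rho>" using rp by (simp add: norm_divide)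
    also have "\<dots> \<le> 2 * cmod z / \<rho>" using qd rp by (simp add: divide_right_mono)
    also have "\<dots> \<le> 2 * cmod z / (r/2)" using rho_pos r
      by (intro divide_left_mono) auto
    finally show ?thesis by simp
  qed
  define s where "s = Re z"
  define t where "t = Im z"
  have sge: "s \<ge> - cmod z" unfolding s_def using abs_Re_le_cmod[of z] by linarith
  have rq: "Re q = r + s" "Im q = t" unfolding q_def s_def t_def by simp_all
  have rho2: "\<rho>^2 = (r+s)^2 + t^2" unfolding \<rho>_def using rq cmod_power2[of q] by simp
  have rho_ge2: "\<rho> \<ge> r + s" unfolding \<rho>_def using abs_Re_le_cmod[of q] rq by linarith
  have pos: "\<rho> + r + s \<ge> r" using rho_pos sge z by linarith
  have prod: "(\<rho> - (r+s)) * (\<rho> + r + s) = t^2" using rho2 by (simp add: algebra_simps power2_eq_square)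
  have t2: "\<bar>r - \<rho> + Re z\<bar> \<le> (cmod z)^2 / r"
  proof -
    have "\<bar>r - \<rho> + Re z\<bar> = \<rho> - (r+s)" using rho_ge2 s_def by simp
    also have "\<dots> = t^2 / (\<rho> + r + s)" using prod pos r by (simp add: field_simps)
    also have "\<dots> \<le> t^2 / r" using pos r by (intro divide_left_mono) auto
    also have "\<dots> \<le> (cmod z)^2 / r"
    proof -
      have "t^2 \<le> (cmod z)^2" unfolding t_def
        by (metis abs_Im_le_cmod power2_abs power_mono abs_ge_zero)
      thus ?thesis using r by (intro divide_right_mono) auto
    qed
    finally show ?thesis .
  qed
  have "cmod ((q / of_real \<rho> - 1) * of_real (r - \<rho>) + of_real (r - \<rho> + Re z))
        \<le> cmod (q / of_real \<rho> - 1) * \<bar>r - \<rho>\<bar> + \<bar>r - \<rho> + Re z\<bar>"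
    by (metis norm_mult norm_of_real norm_triangle_ineq)
  also have "\<dots> \<le> (4 * cmod z / r) * cmod z + (cmod z)^2 / r"
    using t1 t2 rr r by (intro add_mono mult_mono) auto
  also have "\<dots> = 5 * (cmod z)^2 / r" by (simp add: field_simps power2_eq_square)
  finally have "cmod (complex_of_real r * (q / of_real \<rho>) - of_real r - \<i> * of_real (Im z)) \<le> 5 * (cmod z)^2 / r"
    by (subst eq)
  thus ?thesis unfolding q_def \<rho>_def .
qed



lemma lemS:
  fixes y g :: complex
  assumes y: "y \<noteq> 0" and g: "cmod g \<le> cmod y / 2"
  shows "cmod (of_real (cmod y) * ((y+g) / of_real (cmod (y+g))) - y
     - (y / of_real (cmod y)) * (\<i> * of_real (Im (cnj (y / of_real (cmod y)) * g)))) \<le> 5 * (cmod g)^2 / cmod y"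
proof -
  define r where "r = cmod y"
  have r: "r > 0" using y r_def by simp
  define \<omega> where "\<omega> = y / of_real r"
  have om: "cmod \<omega> = 1" using r y unfolding \<omega>_def r_def by (simp add: norm_divide)
  have omc: "\<omega> * cnj \<omega> = 1" using om by (metis complex_norm_square mult.commute of_real_1 power_one)
  define z where "z = cnj \<omega> * g"
  have zn: "cmod z = cmod g" unfolding z_def using om by (simp add: norm_mult)
  have yeq: "y = \<omega> * of_real r" unfolding \<omega>_def using r by simp
  have geq: "g = \<omega> * z" unfolding z_def using omc by (simp add: mult.assoc[symmetric])
  have yg: "y + g = \<omega> * (of_real r + z)" using yeq geq by (simp add: algebra_simps)
  have nyg: "cmod (y+g) = cmod (of_real r + z)" using yg om by (simp add: norm_mult)
  have "of_real (cmod y) * ((y+g) / of_real (cmod (y+g))) - y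
     - (y / of_real (cmod y)) * (\<i> * of_real (Im (cnj (y / of_real (cmod y)) * g)))
     = \<omega> * (complex_of_real r * ((of_real r + z) / of_real (cmod (of_real r + z))) - of_real r - \<i> * of_real (Im z))"
    unfolding r_def[symmetric] \<omega>_def[symmetric] z_def[symmetric] nyg
    by (subst yg, subst yeq, simp add: algebra_simps)
  hence "cmod (of_real (cmod y) * ((y+g) / of_real (cmod (y+g))) - y
     - (y / of_real (cmod y)) * (\<i> * of_real (Im (cnj (y / of_real (cmod y)) * g))))
     = cmod (complex_of_real r * ((of_real r + z) / of_real (cmod (of_real r + z))) - of_real r - \<i> * of_real (Im z))"
    using om by (simp add: norm_mult)
  also have "\<dots> \<le> 5 * (cmod z)^2 / r"
  proof -
    have "cmod z \<le> r/2" using zn g r_def by simp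
    from lemR[OF r this] show ?thesis .
  qed
  finally show ?thesis using zn r_def by simp
qed

lemma phase_norm: "cmod (phasev y $ j) = 1"
  by (simp add: phasev_def norm_divide)

lemma Badj_comp: "(cadj (Bmat A x0) *v z) $ j = cnj (phasev (cadj A *v x0) $ j) * (cadj A *v z) $ j"
  by (simp add: Bmat_def cadj_def matrix_vector_mult_def matrix_matrix_mult_def cdiag_def
      sum_distrib_left sum_distrib_right mult_ac if_distrib cong: if_cong)

lemma Badj_norm:
  assumes iso: "(A::complex^'N^'n) ** cadj A = mat 1"
  shows "norm (cadj (Bmat A x0) *v u) = norm u"
proof -
  have "norm (cadj (Bmat A x0) *v u) = norm (cadj A *v u)"
    unfolding norm_vec_def by (simp add: Badj_comp norm_mult phase_norm)
  thus ?thesis using iso_norm[OF iso] by simp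
qed

lemma Imv_norm: "norm (Imv v) \<le> norm v"
  by (rule norm_le_componentwise_cart) (simp add: Imv_def abs_Im_le_cmod)

lemma Imv_scale: "Imv (complex_of_real c *s v) = c *\<^sub>R Imv v"
  by (simp add: Imv_def vec_eq_iff)

lemma lam_bdd:
  assumes iso: "(A::complex^'N^'n) ** cadj A = mat 1"
  shows "bdd_above {norm (Imv (cadj (Bmat A x0) *v u)) | u. rinner (\<i> *s u) x0 = 0 \<and> norm u = 1}"
  unfolding bdd_above_def
proof (intro exI[of _ 1] ballI)
  fix t assume "t \<in> {norm (Imv (cadj (Bmat A x0) *v u)) | u. rinner (\<i> *s u) x0 = 0 \<and> norm u = 1}"
  then obtain u where "t = norm (Imv (cadj (Bmat A x0) *v u))" "norm u = 1" by blast
  thus "t \<le> 1" using Imv_norm[of "cadj (Bmat A x0) *v u"] Badj_norm[OF iso, of x0 u] by simp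
qed

lemma Gbound:
  assumes iso: "(A::complex^'N^'n) ** cadj A = mat 1"
    and im: "Im (cinner x0 z) = 0"
  shows "norm (Imv (cadj (Bmat A x0) *v z)) \<le> lambda2 A x0 * norm z"
proof (cases "z = 0")
  case True
  have "Imv (cadj (Bmat A x0) *v z) = 0" unfolding True by (simp add: Imv_def vec_eq_iff)
  then show ?thesis using True by simp
next
  case False
  define c where "c = 1 / norm z"
  have c: "c > 0" using False c_def by simp
  define u where "u = complex_of_real c *s z"
  have nu: "norm u = 1" unfolding u_def using c False by (simp add: norm_scale_vec c_def norm_divide)
  have ru: "rinner (\<i> *s u) x0 = 0"
    unfolding rinner_eq inner_cinner
  proof -
    have "cinner (\<i> *s u) x0 = - \<i> * cnj (complex_of_real c * cinner x0 z)"
      unfolding u_def cinner_scale_left cinner_commute[of _ x0] cinner_scale_right by simp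
    thus "Re (cinner (\<i> *s u) x0) = 0" using im by simp
  qed
  have "norm (Imv (cadj (Bmat A x0) *v u)) \<le> lambda2 A x0"
    unfolding lambda2_def using nu ru by (intro cSup_upper lam_bdd[OF iso]) blast
  moreover have "norm (Imv (cadj (Bmat A x0) *v u)) = c * norm (Imv (cadj (Bmat A x0) *v z))"
    unfolding u_def mat_scale Imv_scale using c by simp
  ultimately show ?thesis using c unfolding c_def using False
    by (simp add: field_simps)
qed



lemma cinner_self_real: "Im (cinner v v) = 0"
  by (simp add: cinner_def Im_sum)

lemma sum_abs_prod_le: "(\<Sum>j\<in>UNIV. \<bar>(w::real^'N) $ j\<bar> * \<bar>v $ j\<bar>) \<le> norm w * norm v"
proof -
  have "(\<Sum>j\<in>UNIV. \<bar>w $ j\<bar> * \<bar>v $ j\<bar>) = inner (\<chi> j. \<bar>w $ j\<bar>) (\<chi> j. \<bar>v $ j\<bar>)"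
    by (simp add: inner_vec_def)
  also have "\<dots> \<le> norm (\<chi> j. \<bar>w $ j\<bar>) * norm (\<chi> j. \<bar>v $ j\<bar>)" by (rule norm_cauchy_schwarz)
  also have "\<dots> = norm w * norm v" by (simp add: norm_vec_def)
  finally show ?thesis .
qed

lemma re_aux: "Re (cnj q * (om * (\<i> * complex_of_real w))) = w * Im (cnj om * q)"
  by (simp add: algebra_simps)
lemma cnj_aux:
  assumes "y \<noteq> 0"
  shows "cnj y * (y / complex_of_real (cmod y) * (\<i> * complex_of_real w)) = \<i> * complex_of_real (cmod y * w)"
proof -
  have c1: "cnj y * y = complex_of_real ((cmod y)^2)" by (metis complex_norm_square mult.commute)
  have "cnj y * (y / complex_of_real (cmod y) * (\<i> * complex_of_real w)) = (cnj y * y) / complex_of_real (cmod y) * (\<i> * complex_of_real w)"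
    by (simp add: mult.assoc)
  also have "\<dots> = complex_of_real (cmod y) * (\<i> * complex_of_real w)" using assms
    unfolding c1 by (simp add: power2_eq_square)
  finally show ?thesis by (simp add: mult_ac)
qed

lemma keyK:
  fixes A :: "complex^'N^'n" and x0 :: "complex^'n" and \<epsilon> :: real
  assumes iso: "A ** cadj A = mat 1" and eps: "\<epsilon> > 0"
  shows "\<exists>\<delta>>0. \<forall>x a. cmod a = 1 \<longrightarrow> Im (cinner x0 (a *s x)) = 0 \<longrightarrow> norm (a *s x - x0) < \<delta> \<longrightarrow>
     norm (a *s Fmap A x0 x - x0) \<le> ((lambda2 A x0)^2 + \<epsilon>) * norm (a *s x - x0)"
proof -
  define y where "y = cadj A *v x0"
  define rmin where "rmin = Min (insert 1 {cmod (y$j) | j. y$j \<noteq> 0})"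
  have fin: "finite (insert 1 {cmod (y$j) | j. y$j \<noteq> 0})" by simp
  have rmin_pos: "rmin > 0" unfolding rmin_def using fin by (subst Min_gr_iff) auto
  have rmin_le: "rmin \<le> cmod (y$j)" if "y$j \<noteq> 0" for j
    unfolding rmin_def using fin that by (intro Min_le) auto
  define \<delta> where "\<delta> = min (rmin/2) (\<epsilon> * rmin / 5)"
  have dpos: "\<delta> > 0" unfolding \<delta>_def using rmin_pos eps by simp
  have x0y: "A *v y = x0" unfolding y_def by (simp add: matrix_vector_mul_assoc iso)
  define B where "B = Bmat A x0"
  define lam where "lam = lambda2 A x0"
  have main: "norm (a *s Fmap A x0 x - x0) \<le> (lam^2 + \<epsilon>) * norm (a *s x - x0)"
    if a: "cmod a = 1" and al: "Im (cinner x0 (a *s x)) = 0" and hd: "norm (a *s x - x0) < \<delta>" for x a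
  proof -
    define h where "h = a *s x - x0"
    define g where "g = cadj A *v h"
    have ng: "norm g = norm h" unfolding g_def by (rule iso_norm[OF iso])
    have gj0: "cmod (g$j) \<le> norm g" for j unfolding norm_vec_def by (rule member_le_L2_set) simp_all
    have gj: "cmod (g$j) < \<delta>" for j using gj0[of j] ng hd h_def by simp
    have yg: "cadj A *v (a *s x) = y + g"
      unfolding g_def h_def y_def by (simp add: matrix_vector_mult_diff_distrib)
    have yg2: "a * (cadj A *v x) $ j = y$j + g$j" for j
      using yg[unfolded mat_scale] by (simp add: vec_eq_iff)
    have imh: "Im (cinner x0 h) = 0"
      unfolding h_def cinner_diff_right using al cinner_self_real[of x0] by simp
    define w where "w = Imv (cadj B *v h)"
    have wj: "w$j = Im (cnj (phasev y $ j) * g$j)" for j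
      unfolding w_def B_def Imv_def g_def y_def by (simp add: Badj_comp)
    have nw: "norm w \<le> lam * norm h" unfolding w_def B_def lam_def by (rule Gbound[OF iso imh])
    define e where "e = (\<chi> j. of_real (cmod (y$j)) * (a * phasev (cadj A *v x) $ j) - y$j)"
    define L where "L = (\<chi> j. if y$j = 0 then 0 else (y$j / of_real (cmod (y$j))) * (\<i> * of_real (w$j)))"
    define E where "E = e - L"
    have Fe: "a *s Fmap A x0 x - x0 = A *v e"
    proof -
      have "a *s Fmap A x0 x = A *v (a *s hadamard (cabsv y) (phasev (cadj A *v x)))"
        unfolding Fmap_def y_def by (simp add: mat_scale)
      moreover have "a *s hadamard (cabsv y) (phasev (cadj A *v x)) - y = e"
        unfolding e_def by (simp add: vec_eq_iff hadamard_def cabsv_def mult_ac)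
      ultimately show ?thesis using x0y by (metis matrix_vector_mult_diff_distrib)
    qed
    have Ej: "cmod (E$j) \<le> 5 / rmin * (cmod (g$j))^2" for j
    proof (cases "y$j = 0")
      case True
      then show ?thesis unfolding E_def e_def L_def using rmin_pos by simp
    next
      case False
      have g2: "cmod (g$j) \<le> cmod (y$j) / 2" using gj[of j] rmin_le[OF False] \<delta>_def by linarith
      have "cmod (y$j + g$j) \<ge> cmod (y$j) - cmod (g$j)" by (rule norm_diff_ineq)
      moreover have "cmod (y$j) > 0" using False by simp
      ultimately have "cmod (y$j + g$j) > 0" using g2 by linarith
      hence nz: "y$j + g$j \<noteq> 0" by auto
      hence axz: "(cadj A *v x) $ j \<noteq> 0" using yg2[of j] by auto
      have nax: "cmod ((cadj A *v x) $ j) = cmod (y$j + g$j)"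
        using yg2[of j] a by (metis mult_cancel_right1 norm_mult)
      have ph: "a * phasev (cadj A *v x) $ j = (y$j + g$j) / of_real (cmod (y$j + g$j))"
        using axz nax yg2[of j] by (simp add: phasev_def)
      have py: "phasev y $ j = y$j / of_real (cmod (y$j))" using False by (simp add: phasev_def)
      have "E$j = of_real (cmod (y$j)) * ((y$j + g$j) / of_real (cmod (y$j + g$j))) - y$j
          - (y$j / of_real (cmod (y$j))) * (\<i> * of_real (Im (cnj (y$j / of_real (cmod (y$j))) * g$j)))"
        unfolding E_def e_def L_def using False ph by (simp add: wj py)
      hence "cmod (E$j) \<le> 5 * (cmod (g$j))^2 / cmod (y$j)" using lemS[OF False g2] by simp
      also have "\<dots> \<le> 5 * (cmod (g$j))^2 / rmin"
        using rmin_pos rmin_le[OF False] by (intro divide_left_mono) (auto intro!: mult_pos_pos)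
      finally show ?thesis by simp
    qed
    have nE: "norm (A *v E) \<le> 5 / rmin * (norm h)^2"
    proof -
      have "norm (A *v E) \<le> norm E" by (rule A_contr[OF iso])
      also have "\<dots> \<le> (\<Sum>j\<in>UNIV. cmod (E$j))" unfolding norm_vec_def by (rule L2_set_le_sum) simp
      also have "\<dots> \<le> (\<Sum>j\<in>UNIV. 5 / rmin * (cmod (g$j))^2)" by (rule sum_mono[OF Ej])
      also have "\<dots> = 5 / rmin * (norm g)^2" by (simp add: norm_sq_vec sum_distrib_left)
      finally show ?thesis using ng by simp
    qed
    have nL: "norm (A *v L) \<le> lam^2 * norm h"
    proof -
      have imL: "Im (cinner x0 (A *v L)) = 0"
      proof -
        have "cinner x0 (A *v L) = cinner y L" unfolding y_def cinner_adj ..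
        hence "Im (cinner x0 (A *v L)) = (\<Sum>j\<in>UNIV. Im (cnj (y$j) * L$j))"
          by (simp add: cinner_def Im_sum)
        also have "\<dots> = (\<Sum>j\<in>UNIV. Im (cnj (y$j) * g$j))"
        proof (rule sum.cong[OF refl])
          fix j
          show "Im (cnj (y$j) * L$j) = Im (cnj (y$j) * g$j)"
          proof (cases "y$j = 0")
            case True thus ?thesis by (simp add: L_def)
          next
            case False
            have Lj: "L$j = y$j / of_real (cmod (y$j)) * (\<i> * of_real (w$j))" using False by (simp add: L_def)
            have "cnj (y$j) * L$j = \<i> * of_real (cmod (y$j) * w$j)"
              unfolding Lj by (rule cnj_aux[OF False])
            moreover have "cmod (y$j) * w$j = Im (cnj (y$j) * g$j)"
              using False by (simp add: wj phasev_def Im_divide power2_eq_square field_simps)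
            ultimately show ?thesis by simp
          qed
        qed
        also have "\<dots> = Im (cinner y g)" by (simp add: cinner_def Im_sum)
        also have "\<dots> = Im (cinner x0 h)" unfolding g_def cinner_adj cadj_cadj y_def[symmetric] x0y ..
        finally show ?thesis using imh by simp
      qed
      define v where "v = Imv (cadj B *v (A *v L))"
      have nv: "norm v \<le> lam * norm (A *v L)" unfolding v_def B_def lam_def by (rule Gbound[OF iso imL])
      define q where "q = cadj A *v (A *v L)"
      have vj: "v$j = Im (cnj (phasev y $ j) * q$j)" for j
        unfolding v_def B_def Imv_def q_def y_def by (simp add: Badj_comp)
      have "(norm (A *v L))^2 = inner (A *v L) (A *v L)" by (simp add: power2_norm_eq_inner)
      also have "\<dots> = inner q L" unfolding q_def by (rule inner_adj)
      also have "\<dots> = (\<Sum>j\<in>UNIV. Re (cnj (q$j) * L$j))" by (simp add: inner_cinner cinner_def Re_sum)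
      also have "\<dots> \<le> (\<Sum>j\<in>UNIV. \<bar>w$j\<bar> * \<bar>v$j\<bar>)"
      proof (rule sum_mono)
        fix j
        show "Re (cnj (q$j) * L$j) \<le> \<bar>w$j\<bar> * \<bar>v$j\<bar>"
        proof (cases "y$j = 0")
          case True thus ?thesis by (simp add: L_def)
        next
          case False
          have Lj: "L$j = y$j / of_real (cmod (y$j)) * (\<i> * of_real (w$j))" using False by (simp add: L_def)
          have py: "phasev y $ j = y$j / of_real (cmod (y$j))" using False by (simp add: phasev_def)
          have "Re (cnj (q$j) * L$j) = w$j * v$j"
            unfolding Lj vj py by (rule re_aux)
          also have "\<dots> \<le> \<bar>w$j\<bar> * \<bar>v$j\<bar>" by (metis abs_ge_self abs_mult)
          finally show ?thesis .
        qed
      qed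
      also have "\<dots> \<le> norm w * norm v" by (rule sum_abs_prod_le)
      finally have sq: "(norm (A *v L))^2 \<le> norm w * norm v" .
      show ?thesis
      proof (cases "A *v L = 0")
        case True thus ?thesis using nw norm_ge_zero[of h] by simp
      next
        case False
        hence p: "norm (A *v L) > 0" by simp
        have "0 \<le> lam * norm (A *v L)" using nv norm_ge_zero[of v] by linarith
        hence lam0: "lam \<ge> 0" using p by (simp add: zero_le_mult_iff)
        have "norm w * norm v \<le> norm w * (lam * norm (A *v L))"
          by (rule mult_left_mono[OF nv norm_ge_zero])
        hence "(norm (A *v L))^2 \<le> norm w * (lam * norm (A *v L))"
          using sq by linarith
        hence "norm (A *v L) \<le> norm w * lam" using p by (simp add: power2_eq_square)
        also have "\<dots> \<le> lam * norm h * lam" using nw lam0 by (simp add: mult_right_mono)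
        finally show ?thesis by (simp add: power2_eq_square mult_ac)
      qed
    qed
    have "a *s Fmap A x0 x - x0 = A *v L + A *v E" unfolding Fe E_def
      by (simp add: matrix_vector_right_distrib[symmetric])
    moreover have sq5: "5 / rmin * (norm h)^2 \<le> \<epsilon> * norm h"
    proof -
      have "norm h \<le> \<epsilon> * rmin / 5" using hd h_def \<delta>_def by simp
      hence "5 / rmin * norm h \<le> \<epsilon>" using rmin_pos by (simp add: field_simps)
      hence "5 / rmin * norm h * norm h \<le> \<epsilon> * norm h" by (rule mult_right_mono) simp
      thus ?thesis by (simp add: power2_eq_square mult_ac)
    qed
    ultimately have "norm (a *s Fmap A x0 x - x0) \<le> lam^2 * norm h + \<epsilon> * norm h"
      using nL nE norm_triangle_ineq[of "A *v L" "A *v E"] by simp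
    thus ?thesis unfolding h_def by (simp add: distrib_right)
  qed
  show ?thesis using dpos main unfolding lam_def by blast
qed



lemma dist_formula:
  fixes x x0 :: "complex^'n"
  assumes "cmod \<beta> = 1"
  shows "(norm (\<beta> *s x - x0))^2 = (norm x)^2 + (norm x0)^2 - 2 * Re (\<beta> * cinner x0 x)"
proof -
  have "(norm (\<beta> *s x - x0))^2 = (norm (\<beta> *s x))^2 + (norm x0)^2 - 2 * inner x0 (\<beta> *s x)"
    by (simp add: power2_norm_eq_inner inner_diff_left inner_diff_right inner_commute)
  also have "inner x0 (\<beta> *s x) = Re (\<beta> * cinner x0 x)" by (simp add: inner_cinner cinner_scale_right)
  also have "norm (\<beta> *s x) = norm x" using assms by (simp add: norm_scale_vec)
  finally show ?thesis .
qed

lemma align_re: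
  assumes "a \<in> align_set x0 x" "cmod \<beta> = 1"
  shows "Re (\<beta> * cinner x0 x) \<le> Re (a * cinner x0 x)"
proof -
  have a1: "cmod a = 1" and le: "norm (a *s x - x0) \<le> norm (\<beta> *s x - x0)"
    using assms unfolding align_set_def by auto
  have "(norm (a *s x - x0))^2 \<le> (norm (\<beta> *s x - x0))^2" using le by (simp add: power_mono)
  thus ?thesis using dist_formula[OF a1, of x x0] dist_formula[OF assms(2), of x x0] by simp
qed

lemma align_im:
  assumes "a \<in> align_set x0 x"
  shows "Im (cinner x0 (a *s x)) = 0"
proof -
  define c where "c = cinner x0 x"
  have a1: "cmod a = 1" using assms unfolding align_set_def by auto
  show ?thesis
  proof (cases "c = 0")
    case True thus ?thesis by (simp add: cinner_scale_right c_def[symmetric])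
  next
    case False
    define \<beta> where "\<beta> = cnj c / of_real (cmod c)"
    have b1: "cmod \<beta> = 1" using False by (simp add: \<beta>_def norm_divide)
    have "\<beta> * c = of_real (cmod c)" using False
      by (simp add: \<beta>_def complex_norm_square[symmetric] power2_eq_square field_simps mult.commute)
    hence "cmod c \<le> Re (a * c)" using align_re[OF assms b1] c_def by simp
    moreover have "cmod (a * c) = cmod c" using a1 by (simp add: norm_mult)
    ultimately have "cmod (a*c) \<le> Re (a*c)" by simp
    hence "Im (a*c) = 0"
      by (smt (verit) cmod_power2 abs_Re_le_cmod power2_eq_square zero_le_mult_iff
          mult_nonneg_nonneg power_mono sum_power2_eq_zero_iff)
    thus ?thesis by (simp add: cinner_scale_right c_def)
  qed
qed

lemma align_ex: "\<exists>a. a \<in> align_set x0 x"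
proof -
  define c where "c = cinner x0 x"
  define a where "a = (if c = 0 then 1 else cnj c / of_real (cmod c))"
  have a1: "cmod a = 1" by (simp add: a_def norm_divide)
  have ac: "Re (a * c) = cmod c"
    by (cases "c = 0") (simp_all add: a_def complex_norm_square[symmetric] power2_eq_square field_simps mult.commute)
  have "norm (a *s x - x0) \<le> norm (\<beta> *s x - x0)" if b: "cmod \<beta> = 1" for \<beta>
  proof -
    have "Re (\<beta> * c) \<le> cmod (\<beta> * c)" by (rule complex_Re_le_cmod)
    also have "\<dots> = cmod c" using b by (simp add: norm_mult)
    finally have "(norm (a *s x - x0))^2 \<le> (norm (\<beta> *s x - x0))^2"
      using dist_formula[OF a1, of x x0] dist_formula[OF b, of x x0] ac c_def by simp
    thus ?thesis by (rule power2_le_imp_le) simp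
  qed
  thus ?thesis using a1 unfolding align_set_def by blast
qed

theorem mainTheorem9:
  fixes A :: "complex^'N^'n" and x0 :: "complex^'n" and \<epsilon> :: real
  assumes iso: "A ** cadj A = mat 1"
    and x0: "x0 \<noteq> 0"
    and lam: "lambda2 A x0 < 1"
    and eps: "0 < \<epsilon>" "\<epsilon> < 1 - (lambda2 A x0)\<^sup>2"
  shows "\<exists>U. open U \<and> x0 \<in> U \<and>
    (\<forall>x1\<in>U. let x = (\<lambda>k::nat. (Fmap A x0 ^^ (k - 1)) x1) in
       (\<forall>k\<ge>1. \<forall>a b. a \<in> align_set x0 (x k) \<longrightarrow> b \<in> align_set x0 (x (k+1)) \<longrightarrow>
           norm (b *s x (k+1) - x0) \<le> ((lambda2 A x0)\<^sup>2 + \<epsilon>) * norm (a *s x k - x0)) \<and>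
       (\<forall>\<alpha>::nat \<Rightarrow> complex. (\<forall>k\<ge>1. \<alpha> k \<in> align_set x0 (x k)) \<longrightarrow>
           (\<lambda>k. \<alpha> k *s x k) \<longlonglongrightarrow> x0))"
proof -
  define \<kappa> where "\<kappa> = (lambda2 A x0)\<^sup>2 + \<epsilon>"
  have k0: "\<kappa> > 0" using eps unfolding \<kappa>_def by (simp add: add_nonneg_pos)
  have k1: "\<kappa> < 1" using eps unfolding \<kappa>_def by simp
  obtain \<delta> where d: "\<delta> > 0" and K: "\<And>x a. cmod a = 1 \<Longrightarrow> Im (cinner x0 (a *s x)) = 0 \<Longrightarrow>
     norm (a *s x - x0) < \<delta> \<Longrightarrow> norm (a *s Fmap A x0 x - x0) \<le> \<kappa> * norm (a *s x - x0)"
    using keyK[OF iso eps(1), of x0] unfolding \<kappa>_def by blast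
  have main: "(\<forall>k\<ge>1. \<forall>a b. a \<in> align_set x0 (xs k) \<longrightarrow> b \<in> align_set x0 (xs (k+1)) \<longrightarrow>
           norm (b *s xs (k+1) - x0) \<le> \<kappa> * norm (a *s xs k - x0)) \<and>
       (\<forall>\<alpha>::nat \<Rightarrow> complex. (\<forall>k\<ge>1. \<alpha> k \<in> align_set x0 (xs k)) \<longrightarrow>
           (\<lambda>k. \<alpha> k *s xs k) \<longlonglongrightarrow> x0)"
    if x1: "x1 \<in> ball x0 \<delta>" and xs_def: "xs = (\<lambda>k::nat. (Fmap A x0 ^^ (k - 1)) x1)" for x1 xs
  proof -
    have xs1: "xs 1 = x1" unfolding xs_def by simp
    have xsS: "xs (Suc (Suc n)) = Fmap A x0 (xs (Suc n))" for n unfolding xs_def by simp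
    have step: "norm (b *s xs (Suc n + 1) - x0) \<le> \<kappa> * norm (a *s xs (Suc n) - x0)"
      if a: "a \<in> align_set x0 (xs (Suc n))" and b: "b \<in> align_set x0 (xs (Suc n + 1))"
        and ad: "norm (a *s xs (Suc n) - x0) < \<delta>" for a b n
    proof -
      have a1: "cmod a = 1" using a unfolding align_set_def by auto
      have "norm (b *s xs (Suc n + 1) - x0) \<le> norm (a *s xs (Suc n + 1) - x0)"
        using b a1 unfolding align_set_def by auto
      also have "\<dots> = norm (a *s Fmap A x0 (xs (Suc n)) - x0)" using xsS by simp
      also have "\<dots> \<le> \<kappa> * norm (a *s xs (Suc n) - x0)" by (rule K[OF a1 align_im[OF a] ad])
      finally show ?thesis .
    qed
    have inv: "\<forall>a \<in> align_set x0 (xs (Suc n)). norm (a *s xs (Suc n) - x0) < \<delta>" for n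
    proof (induction n)
      case 0
      show ?case
      proof
        fix a assume a: "a \<in> align_set x0 (xs (Suc 0))"
        have "norm (a *s xs (Suc 0) - x0) \<le> norm (1 *s xs (Suc 0) - x0)"
          using a norm_one[where 'a=complex] unfolding align_set_def by blast
        also have "\<dots> < \<delta>" using x1 xs1 by (simp add: dist_norm norm_minus_commute)
        finally show "norm (a *s xs (Suc 0) - x0) < \<delta>" .
      qed
    next
      case (Suc n)
      show ?case
      proof
        fix b assume b: "b \<in> align_set x0 (xs (Suc (Suc n)))"
        obtain a where a: "a \<in> align_set x0 (xs (Suc n))" using align_ex by blast
        have ad: "norm (a *s xs (Suc n) - x0) < \<delta>" using Suc a by blast
        have "norm (b *s xs (Suc n + 1) - x0) \<le> \<kappa> * norm (a *s xs (Suc n) - x0)"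
          using step[OF a _ ad] b by simp
        also have "\<dots> \<le> norm (a *s xs (Suc n) - x0)" using k1 k0 by (simp add: mult_left_le_one_le)
        finally show "norm (b *s xs (Suc (Suc n)) - x0) < \<delta>" using ad by simp
      qed
    qed
    have P1: "\<forall>k\<ge>1. \<forall>a b. a \<in> align_set x0 (xs k) \<longrightarrow> b \<in> align_set x0 (xs (k+1)) \<longrightarrow>
           norm (b *s xs (k+1) - x0) \<le> \<kappa> * norm (a *s xs k - x0)"
    proof (intro allI impI)
      fix k a b assume k: "k \<ge> 1" and a: "a \<in> align_set x0 (xs k)" and b: "b \<in> align_set x0 (xs (k+1))"
      obtain n where n: "k = Suc n" using k by (cases k) auto
      show "norm (b *s xs (k+1) - x0) \<le> \<kappa> * norm (a *s xs k - x0)"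
        using step[of a n b] a b inv[of n] unfolding n by blast
    qed
    have P2: "(\<lambda>k. \<alpha> k *s xs k) \<longlonglongrightarrow> x0" if al: "\<forall>k\<ge>1. \<alpha> k \<in> align_set x0 (xs k)" for \<alpha>
    proof -
      define D where "D = norm (\<alpha> 1 *s xs 1 - x0)"
      have bnd: "norm (\<alpha> (Suc n) *s xs (Suc n) - x0) \<le> \<kappa>^n * D" for n
      proof (induction n)
        case 0 thus ?case by (simp add: D_def)
      next
        case (Suc n)
        have "norm (\<alpha> (Suc (Suc n)) *s xs (Suc (Suc n)) - x0) \<le> \<kappa> * norm (\<alpha> (Suc n) *s xs (Suc n) - x0)"
          using P1 al by (metis Suc_eq_plus1 le_add2 Suc_le_mono le_SucI)
        also have "\<dots> \<le> \<kappa> * (\<kappa>^n * D)" using Suc k0 by (simp add: mult_left_mono)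
        finally show ?case by simp
      qed
      have ev: "eventually (\<lambda>k. norm (\<alpha> k *s xs k - x0) \<le> \<kappa>^k * (D / \<kappa>)) sequentially"
      proof (rule eventually_sequentiallyI[of 1])
        fix k :: nat assume "k \<ge> 1"
        then obtain n where n: "k = Suc n" by (cases k) auto
        have "\<kappa>^k * (D / \<kappa>) = \<kappa>^n * D" using k0 unfolding n by simp
        thus "norm (\<alpha> k *s xs k - x0) \<le> \<kappa>^k * (D / \<kappa>)" using bnd[of n] n by simp
      qed
      have "(\<lambda>k. \<kappa>^k * (D / \<kappa>)) \<longlonglongrightarrow> 0 * (D / \<kappa>)"
        by (intro tendsto_mult tendsto_const LIMSEQ_power_zero) (use k0 k1 in simp)
      hence "(\<lambda>k. \<alpha> k *s xs k - x0) \<longlonglongrightarrow> 0" using Lim_null_comparison[OF ev] by simp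
      thus ?thesis by (simp add: Lim_null[symmetric])
    qed
    show ?thesis using P1 P2 by blast
  qed
  show ?thesis
  proof (intro exI[of _ "ball x0 \<delta>"] conjI ballI)
    show "open (ball x0 \<delta>)" by simp
    show "x0 \<in> ball x0 \<delta>" using d by simp
    fix x1 assume x1: "x1 \<in> ball x0 \<delta>"
    show "let x = (\<lambda>k::nat. (Fmap A x0 ^^ (k - 1)) x1) in
       (\<forall>k\<ge>1. \<forall>a b. a \<in> align_set x0 (x k) \<longrightarrow> b \<in> align_set x0 (x (k+1)) \<longrightarrow>
           norm (b *s x (k+1) - x0) \<le> ((lambda2 A x0)\<^sup>2 + \<epsilon>) * norm (a *s x k - x0)) \<and>
       (\<forall>\<alpha>::nat \<Rightarrow> complex. (\<forall>k\<ge>1. \<alpha> k \<in> align_set x0 (x k)) \<longrightarrow>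
           (\<lambda>k. \<alpha> k *s x k) \<longlonglongrightarrow> x0)"
      unfolding Let_def \<kappa>_def[symmetric] by (rule main[OF x1 refl])
  qed
qed


end
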